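(* Let $M_C$ be a mixed cycle of order $n$ and let $\eta(M_C)$ be the nullity of $N(M_C)$. Then $\eta(M_C)=0$ if $n$ is odd; if $n\equiv 2\pmod 4$, then $\eta(M_C)=2$ when $M_C$ is negative and $\eta(M_C)=0$ when $M_C$ is positive, semi-positive or semi-negative; if $n\equiv 0\pmod 4$, then $\eta(M_C)=2$ when $M_C$ is positive and $\eta(M_C)=0$ when $M_C$ is negative, semi-positive or semi-negative.
   Context: A mixed graph is obtained from a finite simple graph by orienting the edges of some subset of its edges. With $\omega=\frac{1+\mathbf{i}\sqrt3}{2}$, the matrix $N=(n_{st})$ has entry $\omega$ for an arc from $u_s$ to $u_t$, $\bar\omega$ for an arc from $u_t$ to $u_s$, $1$ for an undirected edge, $0$ otherwise. A mixed cycle is a mixed graph whose underlying graph is a cycle $v_1v_2\cdots v_nv_1$ ($n\ge3$); its weight is $n_{12}n_{23}\cdots n_{n1}$, a sixth root of unity. It is positive if the weight is $1$, negative if $-1$, semi-positive if the weight is $\omega$ or $\bar\omega$, semi-negative if it is $-\omega$ or $-\bar\omega$. *)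

theory Defs
  imports "Jordan_Normal_Form.Matrix_Kernel"
begin

definition omega :: complex where
  "omega = Complex (1/2) (sqrt 3 / 2)"

text \<open>Entry omega at (s,t) means an arc s->t,
  cnj omega an arc t->s, 1 an undirected edge, 0 no edge.\<close>
definition mixed_matrix :: "nat \<Rightarrow> complex mat \<Rightarrow> bool" where
  "mixed_matrix n N \<longleftrightarrow> N \<in> carrier_mat n n \<and>
     (\<forall>i<n. \<forall>j<n. N $$ (i,j) \<in> {0, 1, omega, cnj omega}) \<and>
     (\<forall>i<n. N $$ (i,i) = 0) \<and>
     (\<forall>i<n. \<forall>j<n. N $$ (i,j) = cnj (N $$ (j,i)))"

text \<open>N is the matrix of a mixed cycle v_1 v_2 ... v_n v_1 with v_(k+1) = \<sigma> k.\<close>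
definition mixed_cycle :: "nat \<Rightarrow> complex mat \<Rightarrow> (nat \<Rightarrow> nat) \<Rightarrow> bool" where
  "mixed_cycle n N \<sigma> \<longleftrightarrow> n \<ge> 3 \<and> mixed_matrix n N \<and> bij_betw \<sigma> {..<n} {..<n} \<and>
     (\<forall>i<n. \<forall>j<n. N $$ (i,j) \<noteq> 0 \<longleftrightarrow>
        (\<exists>k<n. (i = \<sigma> k \<and> j = \<sigma> ((k+1) mod n)) \<or> (j = \<sigma> k \<and> i = \<sigma> ((k+1) mod n))))"

definition cycle_weight :: "nat \<Rightarrow> complex mat \<Rightarrow> (nat \<Rightarrow> nat) \<Rightarrow> complex" where
  "cycle_weight n N \<sigma> = (\<Prod>k<n. N $$ (\<sigma> k, \<sigma> ((k+1) mod n)))"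

definition positive_cycle where "positive_cycle n N \<sigma> \<longleftrightarrow> cycle_weight n N \<sigma> = 1"
definition negative_cycle where "negative_cycle n N \<sigma> \<longleftrightarrow> cycle_weight n N \<sigma> = -1"
definition semi_positive_cycle where
  "semi_positive_cycle n N \<sigma> \<longleftrightarrow> cycle_weight n N \<sigma> \<in> {omega, cnj omega}"
definition semi_negative_cycle where
  "semi_negative_cycle n N \<sigma> \<longleftrightarrow> cycle_weight n N \<sigma> \<in> {-omega, -cnj omega}"

definition nullity :: "complex mat \<Rightarrow> nat" where
  "nullity N = kernel_dim N"

end

theory Submission imports Defs begin

lemma omega_cnj_mult: "omega * cnj omega = 1"
  unfolding omega_def by (simp add: complex_eq_iff power2_eq_square)

lemma omega_sq: "omega^2 = omega - 1"
  unfolding omega_def by (simp add: complex_eq_iff power2_eq_square field_simps)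

lemma omega_cube: "omega^3 = -1"
proof -
  have s: "omega*omega = omega - 1" using omega_sq by (simp add: power2_eq_square)
  have "omega^3 = (omega*omega)*omega" by (simp add: power3_eq_cube)
  also have "... = (omega - 1)*omega" by (simp add: s)
  also have "... = omega*omega - omega" by (simp add: algebra_simps)
  also have "... = -1" by (simp add: s)
  finally show ?thesis .
qed

lemma omega6: "omega^6 = 1"
proof -
  have "omega^6 = (omega^3)^2" by (simp flip: power_mult)
  thus ?thesis by (simp add: omega_cube)
qed

lemma cnj_omega6: "(cnj omega)^6 = 1"
  by (metis complex_cnj_one complex_cnj_power omega6)

lemma omega_ne: "omega \<noteq> 1" "omega \<noteq> -1" "cnj omega \<noteq> 1" "cnj omega \<noteq> -1"
  "-omega \<noteq> 1" "-omega \<noteq> -1" "-cnj omega \<noteq> 1" "-cnj omega \<noteq> -1"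
  unfolding omega_def by (simp_all add: complex_eq_iff)

locale mcyc = fixes n N \<sigma> assumes mc: "mixed_cycle n N \<sigma>"
begin

lemma n3: "n \<ge> 3" and mm: "mixed_matrix n N" and bij: "bij_betw \<sigma> {..<n} {..<n}"
  and nz: "\<And>i j. i < n \<Longrightarrow> j < n \<Longrightarrow> N $$ (i,j) \<noteq> 0 \<longleftrightarrow>
        (\<exists>k<n. (i = \<sigma> k \<and> j = \<sigma> ((k+1) mod n)) \<or> (j = \<sigma> k \<and> i = \<sigma> ((k+1) mod n)))"
  using mc unfolding mixed_cycle_def by blast+

lemma Ncar: "N \<in> carrier_mat n n" and Nvals: "\<And>i j. i<n \<Longrightarrow> j<n \<Longrightarrow> N $$ (i,j) \<in> {0, 1, omega, cnj omega}"
  and Nherm: "\<And>i j. i<n \<Longrightarrow> j<n \<Longrightarrow> N $$ (i,j) = cnj (N $$ (j,i))"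
  using mm unfolding mixed_matrix_def by blast+

lemma inj: "inj_on \<sigma> {..<n}" and sig_lt: "k < n \<Longrightarrow> \<sigma> k < n"
  using bij unfolding bij_betw_def by auto

definition p where "p k = \<sigma> (k mod n)"
definition a where "a k = N $$ (p k, p (Suc k))"
definition w where "w = (\<Prod>k<n. a k)"

lemma npos: "n > 0" using n3 by auto

lemma p_lt: "p k < n" unfolding p_def using sig_lt npos by auto

lemma p_per: "p (k + n) = p k" unfolding p_def by simp

lemma a_per: "a (k + n) = a k" unfolding a_def by (metis add_Suc p_per)

lemma p_surj: "i < n \<Longrightarrow> \<exists>k<n. p k = i"
  using bij unfolding bij_betw_def p_def by (metis imageE lessThan_iff mod_less)

lemma p_inj: "p k = p l \<longleftrightarrow> k mod n = l mod n"
  unfolding p_def using inj npos by (metis inj_on_contraD lessThan_iff mod_less_divisor)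

lemma a_vals: "a k \<in> {1, omega, cnj omega}"
proof -
  have "a k \<noteq> 0" unfolding a_def
    apply (subst nz[OF p_lt p_lt])
    apply (rule exI[of _ "k mod n"])
    using npos by (simp add: p_def mod_Suc_eq)
  thus ?thesis using Nvals[OF p_lt p_lt] unfolding a_def by auto
qed

lemma a_unit: "a k * cnj (a k) = 1"
  using a_vals[of k] omega_cnj_mult by (auto simp: mult.commute)

lemma a_unit': "cnj (a k) * a k = 1"
  using a_unit by (simp add: mult.commute)

lemma w_eq: "cycle_weight n N \<sigma> = w"
  unfolding cycle_weight_def w_def a_def p_def
  by (rule prod.cong) (auto simp: mod_Suc_eq)

lemma a6: "(a k)^6 = 1"
  using a_vals[of k] omega6 cnj_omega6 by auto

lemma w6: "w^6 = 1"
  unfolding w_def prod_power_distrib by (simp add: a6)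

lemma mod_suc_cancel: "Suc k mod n = Suc m mod n \<longleftrightarrow> k mod n = m mod n"
  by (metis Zero_not_Suc mod_Suc nat.inject)

lemma sig_p: "m < n \<Longrightarrow> \<sigma> m = p m" unfolding p_def by simp
lemma sig_p2: "\<sigma> ((m+1) mod n) = p (Suc m)" unfolding p_def by simp
lemma p_mod: "p (k mod n) = p k" unfolding p_def by simp

lemma zero_entry:
  assumes j: "j < n" and "j \<noteq> p k" "j \<noteq> p (Suc (Suc k))"
  shows "N $$ (p (Suc k), j) = 0"
proof (rule ccontr)
  assume "N $$ (p (Suc k), j) \<noteq> 0"
  then obtain m where m: "m < n" and
    c: "(p (Suc k) = p m \<and> j = p (Suc m)) \<or> (j = p m \<and> p (Suc k) = p (Suc m))"
  proof -
    from nz[OF p_lt j] \<open>N $$ (p (Suc k), j) \<noteq> 0\<close> obtain m where m: "m < n" and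
      "(p (Suc k) = \<sigma> m \<and> j = \<sigma> ((m+1) mod n)) \<or> (j = \<sigma> m \<and> p (Suc k) = \<sigma> ((m+1) mod n))"
      by blast
    thus ?thesis using that unfolding sig_p[OF m] sig_p2 by blast
  qed
  show False using c
  proof
    assume h: "p (Suc k) = p m \<and> j = p (Suc m)"
    hence "Suc k mod n = m mod n" by (simp add: p_inj)
    hence "Suc (Suc k) mod n = Suc m mod n" using mod_suc_cancel by blast
    thus False using h assms by (simp add: p_inj)
  next
    assume h: "j = p m \<and> p (Suc k) = p (Suc m)"
    hence "k mod n = m mod n" using mod_suc_cancel by (simp add: p_inj)
    thus False using h assms by (simp add: p_inj)
  qed
qed

lemma p_dist: "p k \<noteq> p (Suc (Suc k))"
proof
  assume "p k = p (Suc (Suc k))"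
  hence "k mod n = (k + 2) mod n" by (simp add: p_inj)
  hence "n dvd (k + 2) - k" using mod_eq_dvd_iff_nat[of k "k+2" n] by simp
  hence "n dvd 2" by simp
  thus False using n3 by (simp add: nat_dvd_not_less)
qed

lemma row:
  assumes x: "x \<in> carrier_vec n"
  shows "(N *\<^sub>v x) $ p (Suc k) = a (Suc k) * x $ p (Suc (Suc k)) + cnj (a k) * x $ p k"
proof -
  have "(N *\<^sub>v x) $ p (Suc k) = (\<Sum>j\<in>{0..<n}. N $$ (p (Suc k), j) * x $ j)"
    using Ncar x p_lt by (simp add: scalar_prod_def)
  also have "... = (\<Sum>j\<in>{p k, p (Suc (Suc k))}. N $$ (p (Suc k), j) * x $ j)"
    by (rule sum.mono_neutral_right) (auto simp: p_lt zero_entry)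
  also have "... = N $$ (p (Suc k), p k) * x $ p k + N $$ (p (Suc k), p (Suc (Suc k))) * x $ p (Suc (Suc k))"
    using p_dist by simp
  also have "N $$ (p (Suc k), p k) = cnj (a k)" unfolding a_def by (rule Nherm[OF p_lt p_lt])
  also have "N $$ (p (Suc k), p (Suc (Suc k))) = a (Suc k)" unfolding a_def by simp
  finally show ?thesis by simp
qed

definition c where "c k = - (cnj (a k) * cnj (a (Suc k)))"
definition P where "P s j = (\<Prod>l<j. c (2*l+s))"
definition Y where "Y s k = (if k mod 2 = s then P s (k div 2) else 0)"

lemma kern_rec:
  assumes x: "x \<in> carrier_vec n" and k0: "N *\<^sub>v x = 0\<^sub>v n"
  shows "x $ p (Suc (Suc k)) = c k * x $ p k"
proof -
  have "0 = (N *\<^sub>v x) $ p (Suc k)" using k0 p_lt by simp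
  also have "... = a (Suc k) * x $ p (Suc (Suc k)) + cnj (a k) * x $ p k" by (rule row[OF x])
  finally have "cnj (a (Suc k)) * (a (Suc k) * x $ p (Suc (Suc k)) + cnj (a k) * x $ p k) = 0" by simp
  hence "(cnj (a (Suc k)) * a (Suc k)) * x $ p (Suc (Suc k)) + cnj (a (Suc k)) * cnj (a k) * x $ p k = 0"
    by (simp add: algebra_simps)
  thus ?thesis unfolding c_def a_unit' by (simp add: algebra_simps add_eq_0_iff)
qed

lemma P_Suc: "P s (Suc j) = P s j * c (2*j+s)" unfolding P_def by simp

lemma Y_rec: assumes "s < 2" shows "Y s (Suc (Suc k)) = c k * Y s k"
proof (cases "k mod 2 = s")
  case True
  have d: "Suc (Suc k) div 2 = Suc (k div 2)" by simp
  have e: "2 * (k div 2) + s = k" using True by presburger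
  show ?thesis unfolding Y_def d P_Suc e using True by simp
next
  case False
  thus ?thesis unfolding Y_def by simp
qed

lemma Y_init: "Y 0 0 = 1" "Y 1 0 = 0" "Y 0 1 = 0" "Y 1 1 = 1"
  unfolding Y_def P_def by simp_all

lemma sol:
  assumes x: "x \<in> carrier_vec n" and k0: "N *\<^sub>v x = 0\<^sub>v n"
  shows "x $ p k = Y 0 k * x $ p 0 + Y 1 k * x $ p 1"
proof (induction k rule: less_induct)
  case (less k)
  show ?case
  proof (cases k)
    case 0 thus ?thesis by (simp add: Y_def P_def)
  next
    case (Suc m) note m = this
    show ?thesis
    proof (cases m)
      case 0 thus ?thesis using m by (simp add: Y_def P_def)
    next
      case (Suc l)
      have "x $ p k = c l * x $ p l" using kern_rec[OF x k0] m Suc by simp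
      also have "... = c l * (Y 0 l * x $ p 0 + Y 1 l * x $ p 1)" using less[of l] m Suc by simp
      also have "... = Y 0 k * x $ p 0 + Y 1 k * x $ p 1"
        using m Suc Y_rec[of 0 l] Y_rec[of 1 l] by (simp add: algebra_simps)
      finally show ?thesis .
    qed
  qed
qed

lemma P_formula: "P s j = (-1)^j * cnj (\<Prod>m<2*j. a (m+s))"
proof (induction j)
  case 0 thus ?case unfolding P_def by simp
next
  case (Suc j)
  have e: "2 * Suc j = Suc (Suc (2*j))" by simp
  show ?case unfolding P_Suc Suc e c_def
    by (simp add: algebra_simps)
qed

lemma prod_shift: "(\<Prod>m<n. a (m+s)) = w"
proof (induction s)
  case 0 thus ?case unfolding w_def by simp
next
  case (Suc s)
  obtain n' where n': "n = Suc n'" using npos by (cases n) auto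
  have "(\<Prod>m<n. a (m + Suc s)) = (\<Prod>m<n'. a (Suc m + s)) * a (n + s)"
    unfolding n' by (simp add: prod.lessThan_Suc)
  also have "a (n + s) = a s" using a_per[of s] by (simp add: add.commute)
  also have "(\<Prod>m<n'. a (Suc m + s)) * a s = (\<Prod>m<n. a (m+s))"
    unfolding n' prod.lessThan_Suc_shift by (simp add: mult.commute)
  finally show ?case using Suc by simp
qed

lemma prod_split: "(\<Prod>m<x+y. f m) = (\<Prod>m<x. f m) * (\<Prod>m<y. f (x+m))" for f :: "nat \<Rightarrow> complex"
  by (induction y) (simp_all add: algebra_simps)

lemma a_per': "a (q*n + k) = a k"
  by (induction q) (simp_all, metis a_per add.assoc add.commute)

lemma prod_mult: "(\<Prod>m<q*n. a (m+s)) = w^q"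
proof (induction q)
  case 0 thus ?case by simp
next
  case (Suc q)
  have "(\<Prod>m<Suc q * n. a (m+s)) = (\<Prod>m<q*n + n. a (m+s))" by (simp add: add.commute)
  also have "... = (\<Prod>m<q*n. a (m+s)) * (\<Prod>m<n. a (q*n+m+s))"
    using prod_split[of "\<lambda>m. a (m+s)" "q*n" n] by simp
  also have "(\<Prod>m<n. a (q*n+m+s)) = w" using prod_shift[of s] a_per'[of q]
    by (simp add: add.assoc)
  finally show ?case using Suc by simp
qed

lemma kernel_zero:
  assumes x: "x \<in> carrier_vec n" and k0: "N *\<^sub>v x = 0\<^sub>v n"
    and z: "x $ p 0 = 0" "x $ p 1 = 0"
  shows "x = 0\<^sub>v n"
proof (rule eq_vecI)
  show "dim_vec x = dim_vec (0\<^sub>v n)" using x by simp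
  fix i assume "i < dim_vec (0\<^sub>v n)"
  then obtain k where "p k = i" using p_surj by auto
  thus "x $ i = 0\<^sub>v n $ i" using sol[OF x k0, of k] z \<open>i < _\<close> by simp
qed

lemma triv_crit:
  assumes qj: "q*n = 2*j" and t: "(-1)^j * cnj (w^q) \<noteq> 1"
    and x: "x \<in> carrier_vec n" and k0: "N *\<^sub>v x = 0\<^sub>v n"
  shows "x = 0\<^sub>v n"
proof -
  define t where "t = (-1)^j * cnj (w^q)"
  have "(\<Prod>m<q*n. a m) = w^q" using prod_mult[where q=q and s=0] by simp
  hence "(\<Prod>m<2*j. a m) = w^q" by (simp only: qj)
  hence P0: "P 0 j = t" unfolding t_def P_formula by simp
  have P1: "P 1 j = t" unfolding t_def P_formula using prod_mult[where q=q and s=1] qj by simp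
  have m0: "(2*j) mod n = 0 mod n" using qj[symmetric] by simp
  have "(Suc (2*j)) mod n = Suc ((2*j) mod n) mod n" by (simp add: mod_Suc_eq)
  hence m1: "(Suc (2*j)) mod n = 1 mod n" using m0 by simp
  have "x $ p 0 = x $ p (2*j)" using m0 p_inj[of 0 "2*j"] by simp
  also have "... = t * x $ p 0" using sol[OF x k0, of "2*j"] P0 unfolding Y_def by simp
  finally have "(1 - t) * x $ p 0 = 0" by (simp add: algebra_simps)
  hence z0: "x $ p 0 = 0" using t unfolding t_def by simp
  have "x $ p 1 = x $ p (Suc (2*j))" using m1 p_inj[of 1 "Suc (2*j)"] by simp
  also have "... = t * x $ p 1" using sol[OF x k0, of "Suc (2*j)"] P1 unfolding Y_def by simp
  finally have "(1 - t) * x $ p 1 = 0" by (simp add: algebra_simps)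
  hence z1: "x $ p 1 = 0" using t unfolding t_def by simp
  show ?thesis by (rule kernel_zero[OF x k0 z0 z1])
qed

lemma nullity0:
  assumes "\<And>x. x \<in> carrier_vec n \<Longrightarrow> N *\<^sub>v x = 0\<^sub>v n \<Longrightarrow> x = 0\<^sub>v n"
  shows "nullity N = 0"
proof -
  interpret K: kernel n n N by unfold_locales (rule Ncar)
  have mk: "mat_kernel N = {0\<^sub>v n}"
    using assms Ncar unfolding mat_kernel_def by auto
  have "K.Ker.span {0\<^sub>v n} \<subseteq> mat_kernel N"
    by (rule K.Ker.span_is_subset2) (simp add: mk)
  moreover have "{0\<^sub>v n} \<subseteq> K.Ker.span {0\<^sub>v n}"
    by (rule K.Ker.in_own_span) (simp add: mk)
  ultimately have "K.gen_set {0\<^sub>v n}" using mk by auto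
  hence "K.dim = 0" by (intro K.Ker.dim0I) simp
  thus ?thesis unfolding nullity_def by simp
qed

definition iv where "iv i = the_inv_into {..<n} \<sigma> i"
definition u where "u s = vec n (\<lambda>i. Y s (iv i))"

lemma iv_p: "iv (p k) = k mod n"
  unfolding iv_def p_def using the_inv_into_f_f[OF inj, of "k mod n"] npos by simp

lemma Y_per_gen: assumes per: "\<And>k. Y s (k+n) = Y s k" shows "Y s (m + q*n) = Y s m"
  by (induction q) (simp_all, metis per add.assoc add.commute)

lemma u_p: assumes per: "\<And>k. Y s (k+n) = Y s k" shows "u s $ p k = Y s k"
proof -
  have "u s $ p k = Y s (k mod n)" unfolding u_def using p_lt iv_p by simp
  also have "... = Y s (k mod n + (k div n) * n)" using Y_per_gen[OF per, of "k mod n" "k div n"] by simp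
  also have "k mod n + (k div n) * n = k" by (rule mod_div_mult_eq)
  finally show ?thesis .
qed

context
  fixes h assumes nh: "n = 2*h" and wh: "(-1)^h * cnj w = 1"
begin

lemma P_per: "P s (j + h) = P s j"
proof -
  have e: "2*(j+h) = n + 2*j" using nh by simp
  have "(\<Prod>m<n + 2*j. a (m+s)) = (\<Prod>m<n. a (m+s)) * (\<Prod>m<2*j. a (n+m+s))"
    using prod_split[of "\<lambda>m. a (m+s)" n "2*j"] by simp
  also have "(\<Prod>m<2*j. a (n+m+s)) = (\<Prod>m<2*j. a (m+s))"
    by (intro prod.cong refl) (metis a_per add.commute add.assoc)
  finally have pr: "(\<Prod>m<n + 2*j. a (m+s)) = w * (\<Prod>m<2*j. a (m+s))" using prod_shift by simp
  have "P s (j+h) = (-1)^j * ((-1)^h * cnj w) * cnj (\<Prod>m<2*j. a (m+s))"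
    unfolding P_formula e pr by (simp add: power_add algebra_simps)
  also have "... = P s j" unfolding wh P_formula by simp
  finally show ?thesis .
qed

lemma Y_per: "Y s (k+n) = Y s k"
proof -
  have m: "(k+n) mod 2 = k mod 2" using nh by simp
  have d: "(k+n) div 2 = k div 2 + h" using nh by simp
  show ?thesis unfolding Y_def m d P_per by simp
qed

lemma u_car: "u s \<in> carrier_vec n" unfolding u_def by simp

lemma u_ker: assumes s: "s < 2" shows "N *\<^sub>v u s = 0\<^sub>v n"
proof (rule eq_vecI)
  show "dim_vec (N *\<^sub>v u s) = dim_vec (0\<^sub>v n)" using Ncar by simp
  fix i assume "i < dim_vec (0\<^sub>v n)"
  then obtain k0 where k0: "p k0 = i" using p_surj by auto
  define k where "k = k0 + n - 1"
  have "p (Suc k) = p k0" unfolding k_def using npos p_per[of k0] by (simp add: Suc_diff_le)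
  hence i: "i = p (Suc k)" using k0 by simp
  have "(N *\<^sub>v u s) $ i = a (Suc k) * Y s (Suc (Suc k)) + cnj (a k) * Y s k"
    unfolding i row[OF u_car] u_p[OF Y_per] by simp
  also have "... = (a (Suc k) * cnj (a (Suc k))) * (- cnj (a k)) * Y s k + cnj (a k) * Y s k"
    unfolding Y_rec[OF s] c_def by (simp add: algebra_simps)
  also have "... = 0" unfolding a_unit by simp
  finally show "(N *\<^sub>v u s) $ i = 0\<^sub>v n $ i" using \<open>i < _\<close> by simp
qed

lemma u_in: "s < 2 \<Longrightarrow> u s \<in> mat_kernel N"
  unfolding mat_kernel_def using Ncar u_car u_ker by auto

lemma nullity2: "nullity N = 2"
proof -
  interpret K: kernel n n N by unfold_locales (rule Ncar)
  define B where "B = {u 0, u 1}"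
  have u00: "u 0 $ p 0 = 1" "u 1 $ p 0 = 0" "u 0 $ p 1 = 0" "u 1 $ p 1 = 1"
    using Y_init by (simp_all add: u_p[OF Y_per])
  have neq: "u 0 \<noteq> u 1" using u00 by auto
  have Bsub: "B \<subseteq> mat_kernel N" unfolding B_def using u_in by auto
  have finB: "finite B" "card B = 2" unfolding B_def using neq by auto
  have li: "K.lin_indpt B"
  proof (rule K.Ker.finite_lin_indpt2[OF finB(1) Bsub])
    fix f assume "K.lincomb f B = 0\<^sub>v n"
    hence "K.lincomb f B $ p 0 = 0" "K.lincomb f B $ p 1 = 0" using p_lt by auto
    hence "f (u 0) = 0" "f (u 1) = 0"
      unfolding K.lincomb_index[OF p_lt Bsub] unfolding B_def using neq u00 by auto
    thus "\<forall>v\<in>B. f v = 0" unfolding B_def by auto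
  qed
  have gen: "K.span B = mat_kernel N"
  proof (rule equalityI)
    show "K.span B \<subseteq> mat_kernel N" by (rule K.Ker.span_is_subset2[OF Bsub])
    show "mat_kernel N \<subseteq> K.span B"
    proof
      fix x assume x: "x \<in> mat_kernel N"
      hence xc: "x \<in> carrier_vec n" and xk: "N *\<^sub>v x = 0\<^sub>v n"
        unfolding mat_kernel_def using Ncar by auto
      define f where "f v = (if v = u 0 then x $ p 0 else x $ p 1)" for v
      have lc: "K.lincomb f B \<in> mat_kernel N" by (rule K.Ker.lincomb_closed[OF Bsub]) auto
      have "x = K.lincomb f B"
      proof (rule eq_vecI)
        show "dim_vec x = dim_vec (K.lincomb f B)" using lc xc unfolding mat_kernel_def using Ncar by auto
        fix i assume "i < dim_vec (K.lincomb f B)"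
        hence "i < n" using lc unfolding mat_kernel_def using Ncar by auto
        then obtain k where k: "p k = i" using p_surj by auto
        have "K.lincomb f B $ i = f (u 0) * u 0 $ p k + f (u 1) * u 1 $ p k"
          unfolding k[symmetric] K.lincomb_index[OF p_lt Bsub] unfolding B_def using neq by simp
        also have "... = x $ p 0 * Y 0 k + x $ p 1 * Y 1 k"
          unfolding f_def using neq by (simp add: u_p[OF Y_per])
        also have "... = x $ i" using sol[OF xc xk, of k] k by (simp add: mult.commute)
        finally show "x $ i = K.lincomb f B $ i" by simp
      qed
      thus "x \<in> K.span B" unfolding K.Ker.span_def using finB(1) by blast
    qed
  qed
  have "K.basis B" unfolding K.Ker.basis_def using li gen Bsub by simp
  hence "K.dim = 2" using K.Ker.dim_basis[OF finB(1)] finB(2) by simp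
  thus ?thesis unfolding nullity_def by simp
qed

end

lemma triv_null: assumes "q*n = 2*j" "(-1)^j * cnj (w^q) \<noteq> 1" shows "nullity N = 0"
  by (rule nullity0) (rule triv_crit[OF assms])

lemma main: "(odd n \<longrightarrow> nullity N = 0) \<and>
    (n mod 4 = 2 \<longrightarrow>
       (negative_cycle n N \<sigma> \<longrightarrow> nullity N = 2) \<and>
       (positive_cycle n N \<sigma> \<or> semi_positive_cycle n N \<sigma> \<or> semi_negative_cycle n N \<sigma>
          \<longrightarrow> nullity N = 0)) \<and>
    (n mod 4 = 0 \<longrightarrow>
       (positive_cycle n N \<sigma> \<longrightarrow> nullity N = 2) \<and>
       (negative_cycle n N \<sigma> \<or> semi_positive_cycle n N \<sigma> \<or> semi_negative_cycle n N \<sigma>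
          \<longrightarrow> nullity N = 0))"
proof (intro conjI impI)
  assume o: "odd n"
  have "w^2 \<noteq> -1"
  proof
    assume "w^2 = -1"
    moreover have "w^6 = (w^2)^3" by (simp flip: power_mult)
    ultimately have "w^6 = -1" by simp
    thus False using w6 by simp
  qed
  hence "cnj (w^2) \<noteq> -1" by (metis complex_cnj_cancel_iff complex_cnj_minus complex_cnj_one)
  moreover have "(-1::complex)^n = -1" using o by simp
  ultimately have "(-1)^n * cnj (w^2) \<noteq> 1" by (metis minus_equation_iff mult_minus1)
  thus "nullity N = 0" by (intro triv_null[of 2 n]) simp_all
next
  assume m: "n mod 4 = 2"
  define h where "h = n div 2"
  have nh: "n = 2*h" and oh: "odd h" unfolding h_def using m by presburger+
  have sg: "(-1::complex)^h = -1" using oh by simp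
  { assume "negative_cycle n N \<sigma>"
    hence "w = -1" unfolding negative_cycle_def w_eq .
    hence "(-1)^h * cnj w = 1" using sg by simp
    thus "nullity N = 2" by (rule nullity2[OF nh])
  }
  { assume "positive_cycle n N \<sigma> \<or> semi_positive_cycle n N \<sigma> \<or> semi_negative_cycle n N \<sigma>"
    hence "w \<noteq> -1" unfolding positive_cycle_def semi_positive_cycle_def semi_negative_cycle_def w_eq
      using omega_ne by auto
    hence "cnj w \<noteq> -1" by (metis complex_cnj_cancel_iff complex_cnj_minus complex_cnj_one)
    hence "(-1)^h * cnj (w^1) \<noteq> 1" using sg by (auto simp: minus_equation_iff)
    thus "nullity N = 0" by (intro triv_null[of 1 h]) (simp_all add: nh)
  }
next
  assume m: "n mod 4 = 0"
  define h where "h = n div 2"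
  have nh: "n = 2*h" and oh: "even h" unfolding h_def using m by presburger+
  have sg: "(-1::complex)^h = 1" using oh by simp
  { assume "positive_cycle n N \<sigma>"
    hence "w = 1" unfolding positive_cycle_def w_eq .
    hence "(-1)^h * cnj w = 1" using sg by simp
    thus "nullity N = 2" by (rule nullity2[OF nh])
  }
  { assume "negative_cycle n N \<sigma> \<or> semi_positive_cycle n N \<sigma> \<or> semi_negative_cycle n N \<sigma>"
    hence "w \<noteq> 1" unfolding negative_cycle_def semi_positive_cycle_def semi_negative_cycle_def w_eq
      using omega_ne by auto
    hence "cnj w \<noteq> 1" by (metis complex_cnj_cancel_iff complex_cnj_one)
    hence "(-1)^h * cnj (w^1) \<noteq> 1" using sg by simp
    thus "nullity N = 0" by (intro triv_null[of 1 h]) (simp_all add: nh)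
  }
qed

end

theorem lemma5p4:
  assumes "mixed_cycle n N \<sigma>"
  shows "(odd n \<longrightarrow> nullity N = 0) \<and>
    (n mod 4 = 2 \<longrightarrow>
       (negative_cycle n N \<sigma> \<longrightarrow> nullity N = 2) \<and>
       (positive_cycle n N \<sigma> \<or> semi_positive_cycle n N \<sigma> \<or> semi_negative_cycle n N \<sigma>
          \<longrightarrow> nullity N = 0)) \<and>
    (n mod 4 = 0 \<longrightarrow>
       (positive_cycle n N \<sigma> \<longrightarrow> nullity N = 2) \<and>
       (negative_cycle n N \<sigma> \<or> semi_positive_cycle n N \<sigma> \<or> semi_negative_cycle n N \<sigma>
          \<longrightarrow> nullity N = 0))"
  using mcyc.main[OF mcyc.intro[OF assms]] .

end
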